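(* Let $p_1,\dots,p_d\in(0,1)$ with $\sum_{k=1}^dp_k=1$. Sample tasks $h_1,h_2,\dots$ independently as follows: draw $k\in[d]$ with $\Pr[k=i]=p_i$, then draw $h'$ uniformly from $\mathcal{F}^d_k$ and set the task to $h'\circ\psi^{-1}$. Consider representations $\Phi:\{-1,1\}^m\to\mathcal{Z}$ for which $T_\Phi:=\Phi\circ\psi$ is a bijection of $\mathcal{Z}$ (these are exactly the representations for which, for every possible task sequence, functions $g_i:\mathcal{Z}\to\mathbb{R}$ with $g_i\circ\Phi\in\mathcal{H}(h_i)$ exist; such $g_i$ are then unique). For such $\Phi$ consider the objective $\frac1n\widehat{\deg}(g\circ\Phi)=\frac1n\big(\sum_{i=1}^n\deg(g_i)+\sum_{j=1}^d\deg(\Phi_j)\big)$ of the problem $\min_{\Phi,g}\frac1n\widehat{\deg}(g\circ\Phi)$ subject to $g_i\circ\Phi\in\mathcal{H}(h_i)$ for all $i\in[n]$. Then, almost surely, as $n\to\infty$ this objective converges for every such $\Phi$, and every $\Phi^*$ minimizing the limit learns the world model up to negations and permutations: there exist a permutation $i_1,\dots,i_d$ of $1,\dots,d$ and signs $s_1,\dots,s_d\in\{-1,1\}$ such that $\Phi^*_j(\psi(z))=s_jz_{i_j}$ for every $j\in[d]$ and every $z\in\mathcal{Z}$.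
   Context: Standing setup: integers $m\ge d\ge 1$, $\mathcal{Z}=\{-1,1\}^d$, $\psi:\mathcal{Z}\to\{-1,1\}^m$ injective, $\mathcal{X}:=\psi(\mathcal{Z})$, latent distribution with full support. For $f:\{-1,1\}^n\to\mathbb{R}$, $f=\sum_{S\subseteq[n]}\hat f(S)\chi_S$, $\chi_S(x)=\prod_{i\in S}x_i$, $\deg(f)=\max\{|S|:\hat f(S)\ne0\}$ (0 for constants). $\mathcal{H}(h)$ is the set of $f:\{-1,1\}^m\to\mathbb{R}$ agreeing with the task $h$ on $\mathcal{X}$. Finite-precision convention: fix a finite $V\subset\mathbb{R}$ with $\{-1,1\}\subseteq V$; $\mathcal{F}^d$ is the set of all functions $\{-1,1\}^d\to V$ and $\mathcal{F}^d_k:=\{h\in\mathcal{F}^d:\deg(h)\le k\}$ (a $k$-degree task is one of the form $h'\circ\psi^{-1}$ with $h'\in\mathcal{F}^d_k$). *)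

theory Defs
  imports "HOL-Probability.Probability"
begin

text \<open>The hypercube {-1,1}^n, coordinates indexed 0..n-1; points are
  functions nat => real, extended by the value 1 beyond n (canonical representative).\<close>
definition cube :: "nat \<Rightarrow> (nat \<Rightarrow> real) set" where
  "cube n = {x. (\<forall>i<n. x i \<in> {-1, 1}) \<and> (\<forall>i\<ge>n. x i = 1)}"

definition chi :: "nat set \<Rightarrow> (nat \<Rightarrow> real) \<Rightarrow> real" where
  "chi S x = (\<Prod>i\<in>S. x i)"

definition fhat :: "nat \<Rightarrow> ((nat \<Rightarrow> real) \<Rightarrow> real) \<Rightarrow> nat set \<Rightarrow> real" where
  "fhat n f S = (\<Sum>x\<in>cube n. f x * chi S x) / 2 ^ n"

definition fdeg :: "nat \<Rightarrow> ((nat \<Rightarrow> real) \<Rightarrow> real) \<Rightarrow> nat" where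
  "fdeg n f = Max ({card S | S. S \<subseteq> {..<n} \<and> fhat n f S \<noteq> 0} \<union> {0})"

definition Hset :: "(nat \<Rightarrow> real) set \<Rightarrow> ((nat \<Rightarrow> real) \<Rightarrow> real) \<Rightarrow> ((nat \<Rightarrow> real) \<Rightarrow> real) set" where
  "Hset X h = {f. \<forall>x\<in>X. f x = h x}"

text \<open>F^d: functions {-1,1}^d -> V (canonically 0 off the cube, so the set is finite).\<close>
definition Fd :: "real set \<Rightarrow> nat \<Rightarrow> ((nat \<Rightarrow> real) \<Rightarrow> real) set" where
  "Fd V d = {h. (\<forall>x\<in>cube d. h x \<in> V) \<and> (\<forall>x. x \<notin> cube d \<longrightarrow> h x = 0)}"

definition Fdk :: "real set \<Rightarrow> nat \<Rightarrow> nat \<Rightarrow> ((nat \<Rightarrow> real) \<Rightarrow> real) set" where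
  "Fdk V d k = {h \<in> Fd V d. fdeg d h \<le> k}"

text \<open>Task distribution: k ~ K, then h' uniform on F^d_k. (The task is h' o psi^-1.)\<close>
definition task_pmf :: "real set \<Rightarrow> nat \<Rightarrow> nat pmf \<Rightarrow> ((nat \<Rightarrow> real) \<Rightarrow> real) pmf" where
  "task_pmf V d K = bind_pmf K (\<lambda>k. pmf_of_set (Fdk V d k))"

definition admissible :: "nat \<Rightarrow> nat \<Rightarrow> ((nat \<Rightarrow> real) \<Rightarrow> (nat \<Rightarrow> real))
    \<Rightarrow> ((nat \<Rightarrow> real) \<Rightarrow> (nat \<Rightarrow> real)) set" where
  "admissible m d \<psi> = {\<Phi>. (\<forall>x\<in>cube m. \<Phi> x \<in> cube d) \<and> bij_betw (\<Phi> \<circ> \<psi>) (cube d) (cube d)}"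

definition task_deg :: "nat \<Rightarrow> ((nat \<Rightarrow> real) \<Rightarrow> (nat \<Rightarrow> real)) \<Rightarrow> ((nat \<Rightarrow> real) \<Rightarrow> (nat \<Rightarrow> real))
    \<Rightarrow> ((nat \<Rightarrow> real) \<Rightarrow> real) \<Rightarrow> nat" where
  "task_deg d \<psi> \<Phi> h' = Min {fdeg d g | g. g \<circ> \<Phi> \<in> Hset (\<psi> ` cube d) (h' \<circ> inv_into (cube d) \<psi>)}"

definition objective :: "nat \<Rightarrow> nat \<Rightarrow> ((nat \<Rightarrow> real) \<Rightarrow> (nat \<Rightarrow> real))
    \<Rightarrow> ((nat \<Rightarrow> real) \<Rightarrow> (nat \<Rightarrow> real)) \<Rightarrow> ((nat \<Rightarrow> real) \<Rightarrow> real) stream \<Rightarrow> nat \<Rightarrow> real" where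
  "objective m d \<psi> \<Phi> w n =
     ((\<Sum>i<n. real (task_deg d \<psi> \<Phi> (w !! i))) + (\<Sum>j<d. real (fdeg m (\<lambda>x. \<Phi> x j)))) / real n"

end

theory Submission
  imports Defs
begin


lemma snth_distr:
  fixes P :: "'a pmf"
  shows "distr (stream_space (measure_pmf P)) (measure_pmf P) (\<lambda>w. w !! i) = measure_pmf P"
proof -
  let ?M = "measure_pmf P"
  interpret PP: product_prob_space "\<lambda>_. ?M" UNIV
    by unfold_locales
  have "distr (stream_space ?M) ?M (\<lambda>w. w !! i)
      = distr (distr (\<Pi>\<^sub>M i\<in>UNIV. ?M) (stream_space ?M) to_stream) ?M (\<lambda>w. w !! i)"
    by (subst stream_space_eq_distr) simp
  also have "\<dots> = distr (\<Pi>\<^sub>M i\<in>UNIV. ?M) ?M ((\<lambda>w. w !! i) \<circ> to_stream)"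
    by (rule distr_distr) auto
  also have "\<dots> = distr (\<Pi>\<^sub>M i\<in>UNIV. ?M) ?M (\<lambda>\<omega>. \<omega> i)"
    by (rule distr_cong) (auto simp: to_stream_def)
  also have "\<dots> = ?M" by (rule PP.PiM_component) simp
  finally show ?thesis .
qed

lemma indep_snth:
  fixes P :: "'a pmf"
  assumes "I \<noteq> {}" "finite I"
  shows "prob_space.indep_vars (stream_space (measure_pmf P)) (\<lambda>_. measure_pmf P) (\<lambda>i w. w !! i) I"
proof -
  let ?M = "measure_pmf P"
  interpret S: prob_space "stream_space ?M"
    by (rule prob_space.prob_space_stream_space) (rule prob_space_measure_pmf)
  interpret PP: product_prob_space "\<lambda>_. ?M" UNIV
    by unfold_locales
  have comp: "distr (stream_space ?M) ?M (\<lambda>w. w !! i) = ?M" for i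
  proof -
    have "distr (stream_space ?M) ?M (\<lambda>w. w !! i)
        = distr (distr (\<Pi>\<^sub>M i\<in>UNIV. ?M) (stream_space ?M) to_stream) ?M (\<lambda>w. w !! i)"
      by (subst stream_space_eq_distr) simp
    also have "\<dots> = distr (\<Pi>\<^sub>M i\<in>UNIV. ?M) ?M ((\<lambda>w. w !! i) \<circ> to_stream)"
      by (rule distr_distr) auto
    also have "\<dots> = distr (\<Pi>\<^sub>M i\<in>UNIV. ?M) ?M (\<lambda>\<omega>. \<omega> i)"
      by (rule distr_cong) (auto simp: to_stream_def)
    also have "\<dots> = ?M" by (rule PP.PiM_component) simp
    finally show ?thesis .
  qed
  have joint: "distr (stream_space ?M) (\<Pi>\<^sub>M i\<in>I. ?M) (\<lambda>w. \<lambda>i\<in>I. w !! i) = (\<Pi>\<^sub>M i\<in>I. ?M)"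
  proof -
    have "distr (stream_space ?M) (\<Pi>\<^sub>M i\<in>I. ?M) (\<lambda>w. \<lambda>i\<in>I. w !! i)
        = distr (distr (\<Pi>\<^sub>M i\<in>UNIV. ?M) (stream_space ?M) to_stream) (\<Pi>\<^sub>M i\<in>I. ?M) (\<lambda>w. \<lambda>i\<in>I. w !! i)"
      by (subst stream_space_eq_distr) simp
    also have "\<dots> = distr (\<Pi>\<^sub>M i\<in>UNIV. ?M) (\<Pi>\<^sub>M i\<in>I. ?M) ((\<lambda>w. \<lambda>i\<in>I. w !! i) \<circ> to_stream)"
      by (rule distr_distr) auto
    also have "\<dots> = distr (\<Pi>\<^sub>M i\<in>UNIV. ?M) (\<Pi>\<^sub>M i\<in>I. ?M) (\<lambda>x. restrict x I)"
      by (rule distr_cong) (auto simp: to_stream_def)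
    also have "\<dots> = (\<Pi>\<^sub>M i\<in>I. ?M)" by (rule PP.distr_PiM_restrict_finite) (use assms in auto)
    finally show ?thesis .
  qed
  show ?thesis
    by (subst S.indep_vars_iff_distr_eq_PiM[OF assms(1)]) (auto simp: comp joint)
qed

lemma slln_pmf:
  fixes P :: "'a pmf" and f :: "'a \<Rightarrow> real"
  assumes bnd: "\<And>x. f x \<in> {a..b}" and ab: "a < b"
  shows "AE w in stream_space (measure_pmf P).
           (\<lambda>n. (\<Sum>i<n. f (w !! i)) / real n) \<longlonglongrightarrow> measure_pmf.expectation P f"
proof -
  let ?M = "stream_space (measure_pmf P)"
  let ?mu = "measure_pmf.expectation P f"
  interpret S: prob_space ?M
    by (rule prob_space.prob_space_stream_space) (rule prob_space_measure_pmf)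
  have fm[measurable]: "f \<in> borel_measurable (measure_pmf P)" by simp
  have comp: "distr ?M (measure_pmf P) (\<lambda>w. w !! i) = measure_pmf P" for i
    by (rule snth_distr)
  define A where "A e n = {w \<in> space ?M. e \<le> \<bar>(\<Sum>i<n. f (w !! i)) / real n - ?mu\<bar>}" for e n
  have Asets[measurable]: "A e n \<in> sets ?M" for e n unfolding A_def by measurable
  have Abound: "measure ?M (A e n) \<le> 2 * exp (-2 * e\<^sup>2 / (b-a)\<^sup>2) ^ n" if "e \<ge> 0" for e n
  proof (cases "n = 0")
    case True
    have "measure ?M (A e n) \<le> 1" by simp
    then show ?thesis using True by simp (meson S.prob_le_1 dual_order.trans one_le_numeral)
  next
    case False
    interpret H: Hoeffding_ineq_iid ?M "{..<n}" "\<lambda>i w. f (w !! i)" "\<lambda>w. f (w !! 0)" a b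
      "S.expectation (\<lambda>w. f (w !! 0))"
    proof unfold_locales
      show "S.indep_vars (\<lambda>_. borel) (\<lambda>i w. f (w !! i)) {..<n}"
        using S.indep_vars_compose2[OF indep_snth[of "{..<n}" P], of "\<lambda>i. f" "\<lambda>_. borel"] False
        by auto
      show "distr ?M borel (\<lambda>w. f (w !! i)) = distr ?M borel (\<lambda>w. f (w !! 0))" for i
      proof -
        have "distr ?M borel (\<lambda>w. f (w !! i)) = distr (distr ?M (measure_pmf P) (\<lambda>w. w !! i)) borel f"
          by (subst distr_distr) (auto simp: comp_def)
        also have "\<dots> = distr (distr ?M (measure_pmf P) (\<lambda>w. w !! 0)) borel f"
          by (simp only: comp)
        also have "\<dots> = distr ?M borel (\<lambda>w. f (w !! 0))"
          by (subst distr_distr) (auto simp: comp_def)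
        finally show ?thesis .
      qed
    qed (use bnd in auto)
    have mu: "S.expectation (\<lambda>w. f (w !! 0)) = ?mu"
    proof -
      have "S.expectation (\<lambda>w. f (w !! 0)) = integral\<^sup>L (distr ?M (measure_pmf P) (\<lambda>w. w !! 0)) f"
        by (subst integral_distr) auto
      then show ?thesis by (simp only: comp)
    qed
    have "measure ?M (A e n) \<le> 2 * exp (- 2 * real n * e\<^sup>2 / (b - a)\<^sup>2)"
      using H.Hoeffding_ineq_abs_ge'[OF that ab] False unfolding A_def mu by (simp add: lessThan_empty_iff)
    also have "exp (- 2 * real n * e\<^sup>2 / (b - a)\<^sup>2) = exp (-2 * e\<^sup>2 / (b-a)\<^sup>2) ^ n"
      by (simp add: exp_of_nat_mult[symmetric] field_simps)
    finally show ?thesis .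
  qed
  have AE_e: "AE w in ?M. eventually (\<lambda>n. \<bar>(\<Sum>i<n. f (w !! i)) / real n - ?mu\<bar> < e) sequentially"
    if "e > 0" for e
  proof -
    have q: "exp (-2 * e\<^sup>2 / (b-a)\<^sup>2) < 1" using that ab by simp
    have "summable (\<lambda>n. 2 * exp (-2 * e\<^sup>2 / (b-a)\<^sup>2) ^ n)"
      using q by (intro summable_mult summable_geometric) simp
    then have "summable (\<lambda>n. measure ?M (A e n))"
      by (rule summable_comparison_test'[where N=0]) (use Abound that in auto)
    then have "AE w in ?M. eventually (\<lambda>n. w \<in> space ?M - A e n) sequentially"
      by (intro borel_cantelli_AE1) (auto simp: S.emeasure_eq_measure)
    then show ?thesis
      by eventually_elim (auto elim!: eventually_mono simp: A_def not_le)
  qed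
  have "AE w in ?M. \<forall>k::nat. eventually (\<lambda>n. \<bar>(\<Sum>i<n. f (w !! i)) / real n - ?mu\<bar> < inverse (real (Suc k))) sequentially"
    by (subst AE_all_countable) (auto intro: AE_e)
  then show ?thesis
  proof eventually_elim
    case (elim w)
    show ?case
    proof (rule tendstoI)
      fix e :: real assume "e > 0"
      then obtain k where k: "inverse (real (Suc k)) < e" using reals_Archimedean by blast
      show "eventually (\<lambda>n. dist ((\<Sum>i<n. f (w !! i)) / real n) ?mu < e) sequentially"
        using elim[rule_format, of k] by eventually_elim (use k in \<open>auto simp: dist_real_def\<close>)
    qed
  qed
qed



lemma cube_finite: "finite (cube n)"
proof -
  have "cube n \<subseteq> (\<lambda>b. \<lambda>i. if i < n then b i else 1) ` ({..<n} \<rightarrow>\<^sub>E {-1, 1})"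
  proof
    fix x assume x: "x \<in> cube n"
    have "x = (\<lambda>i. if i < n then restrict x {..<n} i else 1)"
      using x by (auto simp: cube_def)
    moreover have "restrict x {..<n} \<in> {..<n} \<rightarrow>\<^sub>E {-1, 1}" using x by (auto simp: cube_def)
    ultimately show "x \<in> (\<lambda>b. \<lambda>i. if i < n then b i else 1) ` ({..<n} \<rightarrow>\<^sub>E {-1, 1})" by blast
  qed
  then show ?thesis by (rule finite_subset) (intro finite_imageI finite_PiE; auto)
qed

definition flip :: "nat \<Rightarrow> (nat \<Rightarrow> real) \<Rightarrow> (nat \<Rightarrow> real)" where
  "flip j x = x(j := - x j)"

lemma flip_cube: "j < n \<Longrightarrow> x \<in> cube n \<Longrightarrow> flip j x \<in> cube n"
  by (auto simp: cube_def flip_def)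

lemma flip_flip[simp]: "flip j (flip j x) = x"
  by (auto simp: flip_def)

lemma cube_sq: "x \<in> cube n \<Longrightarrow> x i * x i = 1"
  by (cases "i < n") (auto simp: cube_def)

lemma cube_vals: "x \<in> cube n \<Longrightarrow> x i \<in> {-1, 1}"
  by (cases "i < n") (auto simp: cube_def)

lemma chi_flip:
  assumes "j \<in> T" "finite T"
  shows "chi T (flip j x) = - chi T x"
proof -
  have "chi T (flip j x) = flip j x j * (\<Prod>i\<in>T-{j}. flip j x i)"
    unfolding chi_def using assms by (simp add: prod.remove)
  also have "(\<Prod>i\<in>T-{j}. flip j x i) = (\<Prod>i\<in>T-{j}. x i)"
    by (rule prod.cong) (auto simp: flip_def)
  also have "flip j x j * (\<Prod>i\<in>T-{j}. x i) = - chi T x"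
    unfolding chi_def using assms by (simp add: prod.remove flip_def)
  finally show ?thesis .
qed

lemma sum_chi_zero:
  assumes "T \<subseteq> {..<n}" "T \<noteq> {}"
  shows "(\<Sum>x\<in>cube n. chi T x) = 0"
proof -
  obtain j where j: "j \<in> T" using assms by auto
  have jn: "j < n" using j assms by auto
  have fin: "finite T" using assms finite_subset by blast
  have bij: "bij_betw (flip j) (cube n) (cube n)"
    by (rule bij_betwI[where g="flip j"]) (auto simp: flip_cube jn)
  have "(\<Sum>x\<in>cube n. chi T x) = (\<Sum>x\<in>cube n. chi T (flip j x))"
    by (rule sum.reindex_bij_betw[OF bij, symmetric])
  also have "\<dots> = - (\<Sum>x\<in>cube n. chi T x)"
    by (simp add: chi_flip[OF j fin] sum_negf)
  finally show ?thesis by simp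
qed

lemma coord_chi:
  assumes "x \<in> cube n" "finite S"
  shows "x i * chi S x = chi (if i \<in> S then S - {i} else insert i S) x"
proof (cases "i \<in> S")
  case True
  then have "chi S x = x i * chi (S - {i}) x" unfolding chi_def using assms by (simp add: prod.remove)
  then show ?thesis using True cube_sq[OF assms(1), of i] by (simp add: mult.assoc[symmetric])
next
  case False
  then show ?thesis unfolding chi_def using assms by simp
qed

lemma chi_chi_sum:
  assumes x: "x \<in> cube n" and y: "y \<in> cube n"
  shows "(\<Sum>S\<in>Pow {..<n}. chi S x * chi S y) = (if x = y then 2 ^ n else 0)"
proof -
  have "(\<Sum>S\<in>Pow {..<n}. chi S x * chi S y) = (\<Sum>S\<in>Pow {..<n}. (\<Prod>i\<in>S. x i * y i) * (\<Prod>i\<in>{..<n}-S. 1))"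
    by (simp add: chi_def prod.distrib)
  also have "\<dots> = (\<Prod>i<n. x i * y i + 1)"
    by (rule prod_add[symmetric]) simp
  also have "\<dots> = (if x = y then 2 ^ n else 0)"
  proof (cases "x = y")
    case True
    then show ?thesis using cube_sq[OF x] by simp
  next
    case False
    then obtain i where "x i \<noteq> y i" by auto
    then have i: "i < n" using x y by (cases "i < n") (auto simp: cube_def)
    have "x i * y i + 1 = 0"
      using \<open>x i \<noteq> y i\<close> cube_vals[OF x, of i] cube_vals[OF y, of i] by auto
    then have "(\<Prod>i<n. x i * y i + 1) = 0"
      using i by (intro prod_zero) auto
    then show ?thesis using False by simp
  qed
  finally show ?thesis .
qed

lemma fourier_inversion:
  assumes y: "y \<in> cube n"
  shows "f y = (\<Sum>S\<in>Pow {..<n}. fhat n f S * chi S y)"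
proof -
  have "(\<Sum>S\<in>Pow {..<n}. fhat n f S * chi S y)
      = (\<Sum>S\<in>Pow {..<n}. \<Sum>x\<in>cube n. f x * (chi S x * chi S y) / 2 ^ n)"
    by (simp add: fhat_def sum_divide_distrib sum_distrib_right mult.assoc)
  also have "\<dots> = (\<Sum>x\<in>cube n. f x * (\<Sum>S\<in>Pow {..<n}. chi S x * chi S y) / 2 ^ n)"
    by (subst sum.swap) (simp add: sum_divide_distrib sum_distrib_left)
  also have "\<dots> = (\<Sum>x\<in>cube n. if x = y then f y else 0)"
    by (rule sum.cong) (auto simp: chi_chi_sum y)
  also have "\<dots> = f y" using y cube_finite by simp
  finally show ?thesis by simp
qed

lemma fdeg_set_finite: "finite {card S | S. S \<subseteq> {..<n} \<and> fhat n f S \<noteq> 0}"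
proof -
  have "{card S | S. S \<subseteq> {..<n} \<and> fhat n f S \<noteq> 0} \<subseteq> card ` Pow {..<n}" by auto
  then show ?thesis by (rule finite_subset) simp
qed

lemma fdeg_ge: "S \<subseteq> {..<n} \<Longrightarrow> fhat n f S \<noteq> 0 \<Longrightarrow> card S \<le> fdeg n f"
  unfolding fdeg_def by (rule Max_ge) (use fdeg_set_finite in auto)

lemma fdeg_le_iff: "fdeg n f \<le> k \<longleftrightarrow> (\<forall>S. S \<subseteq> {..<n} \<and> fhat n f S \<noteq> 0 \<longrightarrow> card S \<le> k)"
  unfolding fdeg_def by (subst Max_le_iff) (use fdeg_set_finite in auto)

lemma fdeg_le_n: "fdeg n f \<le> n"
  unfolding fdeg_le_iff
proof (intro allI impI)
  fix S assume "S \<subseteq> {..<n} \<and> fhat n f S \<noteq> 0"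
  then have "card S \<le> card {..<n}" by (intro card_mono) auto
  then show "card S \<le> n" by simp
qed

lemma fhat_cong: "(\<And>x. x \<in> cube n \<Longrightarrow> f x = g x) \<Longrightarrow> fhat n f S = fhat n g S"
  unfolding fhat_def by (simp cong: sum.cong)

lemma fdeg_cong: "(\<And>x. x \<in> cube n \<Longrightarrow> f x = g x) \<Longrightarrow> fdeg n f = fdeg n g"
  unfolding fdeg_def by (simp add: fhat_cong[of n f g])

lemma fdeg_const: "fdeg n (\<lambda>x. c) = 0"
proof -
  have *: "fhat n (\<lambda>x. c) S = 0" if "S \<subseteq> {..<n}" "S \<noteq> {}" for S
    unfolding fhat_def using sum_chi_zero[OF that] by (simp add: sum_distrib_left[symmetric])
  have "fdeg n (\<lambda>x. c) \<le> 0" unfolding fdeg_le_iff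
  proof (intro allI impI)
    fix S assume S: "S \<subseteq> {..<n} \<and> fhat n (\<lambda>x. c) S \<noteq> 0"
    then have "S = {}" using * by blast
    then show "card S \<le> 0" by simp
  qed
  then show ?thesis by simp
qed

lemma fdeg_coord:
  assumes "i < n"
  shows "fdeg n (\<lambda>x. x i) \<le> 1"
  unfolding fdeg_le_iff
proof (intro allI impI)
  fix S assume S: "S \<subseteq> {..<n} \<and> fhat n (\<lambda>x. x i) S \<noteq> 0"
  have fin: "finite S" using S finite_subset by blast
  show "card S \<le> 1"
  proof (rule ccontr)
    assume "\<not> card S \<le> 1"
    then have c: "card S \<ge> 2" by simp
    define T where "T = (if i \<in> S then S - {i} else insert i S)"
    have "T \<subseteq> {..<n}" using S assms by (auto simp: T_def)
    moreover have "T \<noteq> {}"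
    proof
      assume "T = {}"
      then have "S \<subseteq> {i}" by (auto simp: T_def split: if_splits)
      then have "card S \<le> 1" using card_mono[of "{i}" S] by simp
      then show False using c by simp
    qed
    ultimately have "(\<Sum>x\<in>cube n. chi T x) = 0" by (rule sum_chi_zero)
    moreover have "(\<Sum>x\<in>cube n. x i * chi S x) = (\<Sum>x\<in>cube n. chi T x)"
      by (rule sum.cong) (auto simp: coord_chi fin T_def)
    ultimately show False using S by (simp add: fhat_def)
  qed
qed

lemma deg1_linear:
  assumes "fdeg n f \<le> 1" and y: "y \<in> cube n"
  shows "f y = fhat n f {} + (\<Sum>j<n. fhat n f {j} * y j)"
proof -
  have "f y = (\<Sum>S\<in>Pow {..<n}. fhat n f S * chi S y)" by (rule fourier_inversion[OF y])
  also have "\<dots> = (\<Sum>S\<in>insert {} ((\<lambda>j. {j}) ` {..<n}). fhat n f S * chi S y)"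
  proof (rule sum.mono_neutral_right)
    show "insert {} ((\<lambda>j. {j}) ` {..<n}) \<subseteq> Pow {..<n}" by auto
    show "\<forall>S\<in>Pow {..<n} - insert {} ((\<lambda>j. {j}) ` {..<n}). fhat n f S * chi S y = 0"
    proof
      fix S assume S: "S \<in> Pow {..<n} - insert {} ((\<lambda>j. {j}) ` {..<n})"
      have "card S \<noteq> 1" using S by (auto simp: card_Suc_eq)
      moreover have "card S \<noteq> 0" using S by (auto dest: finite_subset)
      ultimately have "\<not> card S \<le> 1" by simp
      then have "fhat n f S = 0" using assms(1) S unfolding fdeg_le_iff by blast
      then show "fhat n f S * chi S y = 0" by simp
    qed
  qed simp
  also have "\<dots> = fhat n f {} + (\<Sum>S\<in>(\<lambda>j. {j}) ` {..<n}. fhat n f S * chi S y)"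
    by (subst sum.insert) (auto simp: chi_def)
  also have "(\<Sum>S\<in>(\<lambda>j. {j}) ` {..<n}. fhat n f S * chi S y) = (\<Sum>j<n. fhat n f {j} * y j)"
    by (subst sum.reindex) (auto simp: inj_on_def chi_def)
  finally show ?thesis .
qed

lemma one_cube: "(\<lambda>_. 1) \<in> cube n" by (simp add: cube_def)

lemma upd_cube: "x \<in> cube n \<Longrightarrow> j < n \<Longrightarrow> v \<in> {-1, 1} \<Longrightarrow> x(j := v) \<in> cube n"
  by (auto simp: cube_def)

lemma bool_deg1:
  assumes vals: "\<And>y. y \<in> cube n \<Longrightarrow> f y \<in> {-1, 1}"
    and lin: "\<And>y. y \<in> cube n \<Longrightarrow> f y = cz + (\<Sum>j<n. a j * y j)"
  shows "(\<exists>c. \<forall>y\<in>cube n. f y = c) \<or> (\<exists>j<n. \<exists>s\<in>{-1, 1}. \<forall>y\<in>cube n. f y = s * y j)"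
proof -
  have diff: "f y - f (flip j y) = 2 * a j * y j" if "j < n" "y \<in> cube n" for j y
  proof -
    have "f y - f (flip j y) = (\<Sum>l<n. a l * y l - a l * flip j y l)"
      using lin[OF that(2)] lin[OF flip_cube[OF that]] by (simp add: sum_subtractf)
    also have "\<dots> = (\<Sum>l<n. if l = j then 2 * a j * y j else 0)"
      by (rule sum.cong) (auto simp: flip_def)
    finally show ?thesis using that by simp
  qed
  have pm: "u \<in> {-1, 1} \<Longrightarrow> v \<in> {-1, 1} \<Longrightarrow> u - v \<in> {-2, 0, 2}" for u v :: real by auto
  have aj: "a j \<in> {-1, 0, 1}" if "j < n" for j
  proof -
    have "f (\<lambda>_. 1) - f (flip j (\<lambda>_. 1)) \<in> {-2, 0, 2}"
      by (intro pm vals one_cube flip_cube that)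
    then show ?thesis using diff[OF that one_cube] by auto
  qed
  have two: False if "j < n" "l < n" "j \<noteq> l" "a j \<noteq> 0" "a l \<noteq> 0" for j l
  proof -
    have ajv: "a j \<in> {-1, 1}" and alv: "a l \<in> {-1, 1}" using aj that by auto
    define y where "y = ((\<lambda>_. 1)(j := a j))(l := a l)"
    have y: "y \<in> cube n" unfolding y_def by (intro upd_cube one_cube that ajv alv)
    have fy: "flip l y \<in> cube n" by (intro flip_cube y that)
    have "f y - f (flip j (flip l y)) = (f y - f (flip l y)) + (f (flip l y) - f (flip j (flip l y)))"
      by simp
    also have "\<dots> = 2 * a l * y l + 2 * a j * flip l y j"
      using diff[OF that(2) y] diff[OF that(1) fy] by simp
    also have "\<dots> = 4"
      using that ajv alv by (auto simp: y_def flip_def)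
    finally have "f y - f (flip j (flip l y)) = 4" .
    moreover have "f y - f (flip j (flip l y)) \<in> {-2, 0, 2}"
      by (intro pm vals y flip_cube fy that)
    ultimately show False by auto
  qed
  show ?thesis
  proof (cases "\<forall>j<n. a j = 0")
    case True
    then have "\<forall>y\<in>cube n. f y = cz" using lin by simp
    then show ?thesis by blast
  next
    case False
    then obtain j where j: "j < n" "a j \<noteq> 0" by auto
    have ajv: "a j \<in> {-1, 1}" using aj j by auto
    have lin2: "f y = cz + a j * y j" if "y \<in> cube n" for y
    proof -
      have "(\<Sum>l<n. a l * y l) = (\<Sum>l<n. if l = j then a j * y j else 0)"
        by (rule sum.cong) (use two j in auto)
      then show ?thesis using lin[OF that] j by simp
    qed
    have "f (\<lambda>_. 1) \<in> {-1, 1}" "f (flip j (\<lambda>_. 1)) \<in> {-1, 1}"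
      by (intro vals one_cube flip_cube j)+
    then have "cz + a j \<in> {-1, 1}" "cz - a j \<in> {-1, 1}"
      using lin2[OF one_cube] lin2[OF flip_cube[OF j(1) one_cube]] by (auto simp: flip_def)
    then have "cz = 0" using ajv by auto
    then have "\<forall>y\<in>cube n. f y = a j * y j" using lin2 by simp
    then show ?thesis using j ajv by blast
  qed
qed



lemma exchange:
  fixes \<phi> :: "'a \<Rightarrow> nat"
  assumes U: "finite U" and SU: "S \<subseteq> U" and c: "card S = card A" and A: "A = {x\<in>U. \<phi> x \<le> k}"
  shows "sum \<phi> A \<le> sum \<phi> S \<and> (sum \<phi> S = sum \<phi> A \<longrightarrow> S = A)"
proof -
  have fS: "finite S" using U SU finite_subset by blast
  have fA: "finite A" using U A by simp
  have s1: "sum \<phi> S = sum \<phi> (S \<inter> A) + sum \<phi> (S - A)" using fS by (rule sum.Int_Diff)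
  have s2: "sum \<phi> A = sum \<phi> (S \<inter> A) + sum \<phi> (A - S)"
    using sum.Int_Diff[OF fA, of \<phi> S] by (simp add: Int_commute)
  have c1: "card (S - A) = card S - card (S \<inter> A)" using fS by (simp add: card_Diff_subset_Int)
  have c2: "card (A - S) = card A - card (A \<inter> S)" using fA by (simp add: card_Diff_subset_Int)
  have cc: "card (S - A) = card (A - S)" using c1 c2 c by (simp add: Int_commute)
  have b1: "sum \<phi> (A - S) \<le> card (A - S) * k"
    using sum_bounded_above[of "A - S" \<phi> k] A by auto
  have b2: "card (S - A) * (k + 1) \<le> sum \<phi> (S - A)"
    using sum_bounded_below[of "S - A" "k + 1" \<phi>] A SU by (auto simp: not_le Suc_le_eq)
  have kk: "card (A - S) * k \<le> card (S - A) * (k + 1)" by (simp add: cc)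
  have m: "sum \<phi> (A - S) \<le> sum \<phi> (S - A)" using b1 b2 kk by linarith
  have le: "sum \<phi> A \<le> sum \<phi> S" using s1 s2 m by linarith
  have "S = A" if eq: "sum \<phi> S = sum \<phi> A"
  proof -
    have e1: "card (S - A) * (k + 1) = card (A - S) * k + card (S - A)" by (simp add: cc algebra_simps)
    have "card (S - A) = 0" using s1 s2 b1 b2 e1 eq by linarith
    then have "S - A = {}" using fS by simp
    then have "S \<subseteq> A" by auto
    then show ?thesis using card_subset_eq[OF fA] c by simp
  qed
  then show ?thesis using le by blast
qed

lemma Fd_finite: assumes "finite V" shows "finite (Fd V d)"
proof -
  have "Fd V d \<subseteq> (\<lambda>g x. if x \<in> cube d then g x else 0) ` (cube d \<rightarrow>\<^sub>E V)"
  proof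
    fix h assume h: "h \<in> Fd V d"
    have "h = (\<lambda>x. if x \<in> cube d then restrict h (cube d) x else 0)"
      using h by (auto simp: Fd_def)
    moreover have "restrict h (cube d) \<in> cube d \<rightarrow>\<^sub>E V" using h by (auto simp: Fd_def)
    ultimately show "h \<in> (\<lambda>g x. if x \<in> cube d then g x else 0) ` (cube d \<rightarrow>\<^sub>E V)" by blast
  qed
  then show ?thesis by (rule finite_subset) (intro finite_imageI finite_PiE cube_finite assms)
qed

definition R :: "nat \<Rightarrow> ((nat \<Rightarrow> real) \<Rightarrow> (nat \<Rightarrow> real)) \<Rightarrow> ((nat \<Rightarrow> real) \<Rightarrow> real) \<Rightarrow> ((nat \<Rightarrow> real) \<Rightarrow> real)" where
  "R d T h = (\<lambda>y. if y \<in> cube d then h (inv_into (cube d) T y) else 0)"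

lemma R_apply:
  assumes "bij_betw T (cube d) (cube d)" "z \<in> cube d"
  shows "R d T h (T z) = h z"
  using assms by (auto simp: R_def bij_betw_def inv_into_f_f)

lemma R_Fd:
  assumes "bij_betw T (cube d) (cube d)" "h \<in> Fd V d"
  shows "R d T h \<in> Fd V d"
  using assms by (auto simp: R_def Fd_def bij_betw_def inv_into_into)

lemma R_inj:
  assumes T: "bij_betw T (cube d) (cube d)"
  shows "inj_on (R d T) (Fd V d)"
proof
  fix h1 h2 assume h: "h1 \<in> Fd V d" "h2 \<in> Fd V d" "R d T h1 = R d T h2"
  show "h1 = h2"
  proof
    fix x show "h1 x = h2 x"
    proof (cases "x \<in> cube d")
      case True
      then show ?thesis using R_apply[OF T True, of h1] R_apply[OF T True, of h2] h(3) by simp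
    next
      case False
      then show ?thesis using h by (simp add: Fd_def)
    qed
  qed
qed

lemma R_restrict: "R d (restrict T (cube d)) = R d T"
proof -
  have "\<And>y. (\<lambda>x. x \<in> cube d \<and> restrict T (cube d) x = y) = (\<lambda>x. x \<in> cube d \<and> T x = y)" by auto
  then show ?thesis unfolding R_def inv_into_def by presburger
qed

lemma R_id:
  assumes "\<And>z. z \<in> cube d \<Longrightarrow> T z = z" "h \<in> Fd V d"
  shows "R d T h = h"
proof
  fix y
  have b: "bij_betw T (cube d) (cube d)" by (rule bij_betwI[where g=id]) (auto simp: assms)
  show "R d T h y = h y"
  proof (cases "y \<in> cube d")
    case True
    then show ?thesis using R_apply[OF b True, of h] assms(1)[OF True] by simp
  next
    case False
    then show ?thesis using assms(2) by (simp add: R_def Fd_def)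
  qed
qed

lemma task_deg_R:
  assumes \<Phi>: "\<Phi> \<in> admissible m d \<psi>" and \<psi>: "inj_on \<psi> (cube d)"
  shows "task_deg d \<psi> \<Phi> h = fdeg d (R d (\<Phi> \<circ> \<psi>) h)"
proof -
  let ?T = "\<Phi> \<circ> \<psi>"
  have T: "bij_betw ?T (cube d) (cube d)" using \<Phi> by (simp add: admissible_def)
  have "{fdeg d g | g. g \<circ> \<Phi> \<in> Hset (\<psi> ` cube d) (h \<circ> inv_into (cube d) \<psi>)} = {fdeg d (R d ?T h)}"
  proof (intro equalityI subsetI)
    fix u assume "u \<in> {fdeg d g | g. g \<circ> \<Phi> \<in> Hset (\<psi> ` cube d) (h \<circ> inv_into (cube d) \<psi>)}"
    then obtain g where u: "u = fdeg d g" and g: "g \<circ> \<Phi> \<in> Hset (\<psi> ` cube d) (h \<circ> inv_into (cube d) \<psi>)"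
      by blast
    have "g y = R d ?T h y" if y: "y \<in> cube d" for y
    proof -
      obtain z where z: "z \<in> cube d" "y = ?T z" using T y by (auto simp: bij_betw_def)
      have "g y = h (inv_into (cube d) \<psi> (\<psi> z))" using g z by (auto simp: Hset_def)
      also have "\<dots> = h z" using \<psi> z by (simp add: inv_into_f_f)
      also have "\<dots> = R d ?T h y" using R_apply[OF T z(1)] z by simp
      finally show ?thesis .
    qed
    then have "fdeg d g = fdeg d (R d ?T h)" by (rule fdeg_cong)
    then show "u \<in> {fdeg d (R d ?T h)}" using u by simp
  next
    fix u assume "u \<in> {fdeg d (R d ?T h)}"
    moreover have "R d ?T h \<circ> \<Phi> \<in> Hset (\<psi> ` cube d) (h \<circ> inv_into (cube d) \<psi>)"
      unfolding Hset_def
    proof (intro CollectI ballI)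
      fix x assume "x \<in> \<psi> ` cube d"
      then obtain z where z: "z \<in> cube d" "x = \<psi> z" by blast
      have "(R d ?T h \<circ> \<Phi>) x = R d ?T h (?T z)" using z by simp
      also have "\<dots> = h z" by (rule R_apply[OF T z(1)])
      also have "\<dots> = (h \<circ> inv_into (cube d) \<psi>) x" using z \<psi> by (simp add: inv_into_f_f)
      finally show "(R d ?T h \<circ> \<Phi>) x = (h \<circ> inv_into (cube d) \<psi>) x" .
    qed
    ultimately show "u \<in> {fdeg d g | g. g \<circ> \<Phi> \<in> Hset (\<psi> ` cube d) (h \<circ> inv_into (cube d) \<psi>)}"
      by auto
  qed
  then show ?thesis by (simp add: task_deg_def)
qed



lemma Fdk_finite: "finite V \<Longrightarrow> finite (Fdk V d k)"
  unfolding Fdk_def using Fd_finite by (rule finite_subset[rotated]) auto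

lemma const_in_Fdk:
  assumes "1 \<in> V" shows "(\<lambda>x. if x \<in> cube d then 1 else 0) \<in> Fdk V d k"
proof -
  have "fdeg d (\<lambda>x. if x \<in> cube d then 1 else 0) = fdeg d (\<lambda>x. 1)" by (rule fdeg_cong) simp
  then show ?thesis using assms by (simp add: Fdk_def Fd_def fdeg_const)
qed

lemma coord_in_Fdk:
  assumes "{-1, 1} \<subseteq> V" "i < d" shows "(\<lambda>x. if x \<in> cube d then x i else 0) \<in> Fdk V d 1"
proof -
  have "fdeg d (\<lambda>x. if x \<in> cube d then x i else 0) = fdeg d (\<lambda>x. x i)" by (rule fdeg_cong) simp
  moreover have "x i \<in> V" if "x \<in> cube d" for x using cube_vals[OF that, of i] assms(1) by auto
  ultimately show ?thesis using fdeg_coord[OF assms(2)]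
    by (auto simp: Fdk_def Fd_def)
qed

lemma Fdk_ne: "1 \<in> V \<Longrightarrow> Fdk V d k \<noteq> {}"
  using const_in_Fdk by blast

lemma expect_task:
  assumes V: "finite V" "1 \<in> V" and K: "set_pmf K \<subseteq> {1..d}"
  shows "measure_pmf.expectation (task_pmf V d K) g
      = (\<Sum>k\<in>{1..d}. pmf K k * ((\<Sum>h\<in>Fdk V d k. g h) / real (card (Fdk V d k))))"
  unfolding task_pmf_def
  by (subst pmf_expectation_bind[of "{1..d}"])
     (use V K in \<open>auto simp: Fdk_finite Fdk_ne integral_pmf_of_set\<close>)

lemma key_ineq:
  assumes T: "bij_betw T (cube d) (cube d)" and V: "finite V"
  shows "(\<Sum>h\<in>Fdk V d k. fdeg d h) \<le> (\<Sum>h\<in>Fdk V d k. fdeg d (R d T h)) \<and>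
         ((\<Sum>h\<in>Fdk V d k. fdeg d (R d T h)) = (\<Sum>h\<in>Fdk V d k. fdeg d h) \<longrightarrow> R d T ` Fdk V d k = Fdk V d k)"
proof -
  have sub: "Fdk V d k \<subseteq> Fd V d" by (auto simp: Fdk_def)
  have inj: "inj_on (R d T) (Fdk V d k)" using R_inj[OF T] sub by (rule inj_on_subset)
  have s: "(\<Sum>h\<in>Fdk V d k. fdeg d (R d T h)) = sum (fdeg d) (R d T ` Fdk V d k)"
    using inj by (simp add: sum.reindex)
  have "sum (fdeg d) (Fdk V d k) \<le> sum (fdeg d) (R d T ` Fdk V d k) \<and>
       (sum (fdeg d) (R d T ` Fdk V d k) = sum (fdeg d) (Fdk V d k) \<longrightarrow> R d T ` Fdk V d k = Fdk V d k)"
  proof (rule exchange[where U = "Fd V d"])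
    show "finite (Fd V d)" using V by (rule Fd_finite)
    show "R d T ` Fdk V d k \<subseteq> Fd V d" using R_Fd[OF T] sub by auto
    show "card (R d T ` Fdk V d k) = card (Fdk V d k)" using inj by (rule card_image)
    show "Fdk V d k = {x \<in> Fd V d. fdeg d x \<le> k}" by (simp add: Fdk_def)
  qed
  then show ?thesis using s by simp
qed

definition Phi0 :: "nat \<Rightarrow> ((nat \<Rightarrow> real) \<Rightarrow> (nat \<Rightarrow> real)) \<Rightarrow> (nat \<Rightarrow> real) \<Rightarrow> (nat \<Rightarrow> real)" where
  "Phi0 d \<psi> x = (if x \<in> \<psi> ` cube d then inv_into (cube d) \<psi> x else (\<lambda>_. 1))"

lemma Phi0:
  assumes "inj_on \<psi> (cube d)"
  shows "Phi0 d \<psi> \<in> admissible m d \<psi>" "\<And>z. z \<in> cube d \<Longrightarrow> (Phi0 d \<psi> \<circ> \<psi>) z = z"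
proof -
  show *: "(Phi0 d \<psi> \<circ> \<psi>) z = z" if "z \<in> cube d" for z
    using that assms by (simp add: Phi0_def inv_into_f_f)
  have "bij_betw (Phi0 d \<psi> \<circ> \<psi>) (cube d) (cube d)"
    by (rule bij_betwI[where g = id]) (use * in \<open>auto simp del: comp_apply\<close>)
  moreover have "Phi0 d \<psi> x \<in> cube d" for x
    by (auto simp: Phi0_def inv_into_into one_cube)
  ultimately show "Phi0 d \<psi> \<in> admissible m d \<psi>" by (simp add: admissible_def)
qed

lemma obj_tendsto:
  assumes \<Phi>: "\<Phi> \<in> admissible m d \<psi>" and \<psi>: "inj_on \<psi> (cube d)"
    and L: "(\<lambda>n. (\<Sum>i<n. real (fdeg d (R d (\<Phi> \<circ> \<psi>) (w !! i)))) / real n) \<longlonglongrightarrow> L"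
  shows "objective m d \<psi> \<Phi> w \<longlonglongrightarrow> L"
proof -
  let ?C = "(\<Sum>j<d. real (fdeg m (\<lambda>x. \<Phi> x j)))"
  have "objective m d \<psi> \<Phi> w = (\<lambda>n. (\<Sum>i<n. real (fdeg d (R d (\<Phi> \<circ> \<psi>) (w !! i)))) / real n + ?C / real n)"
    by (intro ext) (simp add: objective_def task_deg_R[OF \<Phi> \<psi>] add_divide_distrib)
  moreover have "(\<lambda>n. (\<Sum>i<n. real (fdeg d (R d (\<Phi> \<circ> \<psi>) (w !! i)))) / real n + ?C / real n) \<longlonglongrightarrow> L + 0"
    by (intro tendsto_add L lim_const_over_n)
  ultimately show ?thesis by simp
qed



lemma signed_perm:
  assumes T: "bij_betw T (cube d) (cube d)" and V: "{-1, 1} \<subseteq> V"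
    and eq: "R d T ` Fdk V d 1 = Fdk V d 1"
  shows "\<exists>\<pi> s. \<pi> permutes {..<d} \<and> (\<forall>j<d. s j \<in> {-1, 1::real}) \<and>
                 (\<forall>j<d. \<forall>z\<in>cube d. T z j = s j * z (\<pi> j))"
proof -
  have Tc: "T z \<in> cube d" if "z \<in> cube d" for z using T that by (auto simp: bij_betw_def)
  have surj: "\<exists>z\<in>cube d. T z = y" if "y \<in> cube d" for y
    using T that unfolding bij_betw_def by (metis imageE)
  have a: "\<exists>j<d. \<exists>s\<in>{-1, 1}. \<forall>z\<in>cube d. T z i = s * z j" if i: "i < d" for i
  proof -
    let ?c = "\<lambda>x. if x \<in> cube d then x i else 0"
    have "?c \<in> R d T ` Fdk V d 1" using coord_in_Fdk[OF V i] by (simp only: eq)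
    then obtain g where g1: "?c = R d T g" and g0: "g \<in> Fdk V d 1" by (erule imageE)
    note g = g0 g1[symmetric]
    have gz: "g z = T z i" if "z \<in> cube d" for z
    proof -
      have "g z = R d T g (T z)" using R_apply[OF T that] by simp
      also have "\<dots> = T z i" using g(2) Tc[OF that] by simp
      finally show ?thesis .
    qed
    have deg: "fdeg d g \<le> 1" using g(1) by (simp add: Fdk_def)
    have "(\<exists>c. \<forall>y\<in>cube d. g y = c) \<or> (\<exists>j<d. \<exists>s\<in>{-1, 1}. \<forall>y\<in>cube d. g y = s * y j)"
    proof (rule bool_deg1[where cz = "fhat d g {}" and a = "\<lambda>j. fhat d g {j}"])
      show "g y \<in> {-1, 1}" if "y \<in> cube d" for y using gz[OF that] cube_vals[OF Tc[OF that]] by simp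
      show "g y = fhat d g {} + (\<Sum>j<d. fhat d g {j} * y j)" if "y \<in> cube d" for y
        by (rule deg1_linear[OF deg that])
    qed
    then show ?thesis
    proof
      assume "\<exists>c. \<forall>y\<in>cube d. g y = c"
      then obtain c where c: "\<forall>y\<in>cube d. g y = c" by blast
      have cv: "c \<in> {-1, 1}" using c gz[OF one_cube] cube_vals[OF Tc[OF one_cube], of i] one_cube by auto
      have "(\<lambda>_. 1)(i := - c) \<in> cube d" using cv by (intro upd_cube one_cube i) auto
      then obtain z where z: "z \<in> cube d" "T z = (\<lambda>_. 1)(i := - c)" using surj by blast
      have "g z = c" using c z(1) by blast
      then have "T z i = c" using gz[OF z(1)] by simp
      moreover have "T z i = - c" using z(2) by simp
      ultimately show ?thesis using cv by auto
    next
      assume "\<exists>j<d. \<exists>s\<in>{-1, 1}. \<forall>y\<in>cube d. g y = s * y j"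
      then obtain j s where js: "j < d" "s \<in> {-1, 1}" "\<forall>y\<in>cube d. g y = s * y j" by blast
      have "\<forall>z\<in>cube d. T z i = s * z j" using js(3) gz by simp
      then show ?thesis using js(1,2) by blast
    qed
  qed
  have "\<forall>i\<in>{..<d}. \<exists>p. fst p < d \<and> snd p \<in> {-1, 1} \<and> (\<forall>z\<in>cube d. T z i = snd p * z (fst p))"
  proof
    fix i assume "i \<in> {..<d}"
    then obtain j s where js: "j < d" "s \<in> {-1, 1}" "\<forall>z\<in>cube d. T z i = s * z j" using a by blast
    show "\<exists>p. fst p < d \<and> snd p \<in> {-1, 1} \<and> (\<forall>z\<in>cube d. T z i = snd p * z (fst p))"
      by (rule exI[of _ "(j, s)"]) (use js in simp)
  qed
  from bchoice[OF this] obtain F where F: "\<forall>i\<in>{..<d}. fst (F i) < d \<and> snd (F i) \<in> {-1, 1} \<and> (\<forall>z\<in>cube d. T z i = snd (F i) * z (fst (F i)))"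
    by blast
  define \<pi> where "\<pi> i = (if i < d then fst (F i) else i)" for i
  define s where "s i = snd (F i)" for i
  have \<pi>d: "\<pi> i < d" if "i < d" for i using F that by (simp add: \<pi>_def)
  have sv: "s i \<in> {-1, 1}" if "i < d" for i using F that by (simp add: s_def)
  have Tf: "T z i = s i * z (\<pi> i)" if "i < d" "z \<in> cube d" for i z
    using F that by (simp add: s_def \<pi>_def)
  have inj: "inj_on \<pi> {..<d}"
  proof
    fix i i' assume ii: "i \<in> {..<d}" "i' \<in> {..<d}" "\<pi> i = \<pi> i'"
    show "i = i'"
    proof (rule ccontr)
      assume ne: "i \<noteq> i'"
      have "((\<lambda>_. 1)(i := s i))(i' := - s i') \<in> cube d"
        using ii sv by (intro upd_cube one_cube) auto
      then obtain z where z: "z \<in> cube d" "T z = ((\<lambda>_. 1)(i := s i))(i' := - s i')" using surj by blast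
      have e1: "s i = s i * z (\<pi> i)" using Tf[of i z] z ii ne by simp
      have e2: "- s i' = s i' * z (\<pi> i)" using Tf[of i' z] z ii ne by simp
      have "z (\<pi> i) = 1" using e1 sv[of i] ii by auto
      then show False using e2 sv[of i'] ii by auto
    qed
  qed
  have "\<pi> ` {..<d} = {..<d}" using inj \<pi>d by (intro endo_inj_surj) auto
  then have "bij_betw \<pi> {..<d} {..<d}" using inj by (simp add: bij_betw_def)
  then have "\<pi> permutes {..<d}" by (rule bij_imp_permutes) (simp add: \<pi>_def)
  then show ?thesis using sv Tf by blast
qed



lemma Ksup_lemma:
  fixes d :: nat and K :: "nat pmf"
  assumes "(\<Sum>i=1..d. pmf K i) = 1"
  shows "set_pmf K \<subseteq> {1..d}"
proof
  fix x assume x: "x \<in> set_pmf K"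
  show "x \<in> {1..d}"
  proof (rule ccontr)
    assume nx: "x \<notin> {1..d}"
    have "measure_pmf.prob K (insert x {1..d}) = pmf K x + (\<Sum>i=1..d. pmf K i)"
      using nx by (simp add: measure_measure_pmf_finite)
    moreover have "pmf K x > 0" using x by (simp add: set_pmf_eq')
    moreover have "measure_pmf.prob K (insert x {1..d}) \<le> 1" by simp
    ultimately show False using assms by simp
  qed
qed

lemma Tset_finite: "finite ((\<lambda>\<Phi>. restrict (\<Phi> \<circ> \<psi>) (cube d)) ` admissible m d \<psi>)"
proof -
  have "(\<lambda>\<Phi>. restrict (\<Phi> \<circ> \<psi>) (cube d)) ` admissible m d \<psi> \<subseteq> cube d \<rightarrow>\<^sub>E cube d"
    unfolding admissible_def by (auto simp: bij_betw_def)
  then show ?thesis by (rule finite_subset) (intro finite_PiE cube_finite)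
qed

lemma main_AE:
  "AE w in stream_space (measure_pmf (task_pmf V d K)).
      \<forall>T\<in>(\<lambda>\<Phi>. restrict (\<Phi> \<circ> \<psi>) (cube d)) ` admissible m d \<psi>.
        (\<lambda>n. (\<Sum>i<n. real (fdeg d (R d T (w !! i)))) / real n) \<longlonglongrightarrow>
          measure_pmf.expectation (task_pmf V d K) (\<lambda>h. real (fdeg d (R d T h)))"
proof (rule AE_finite_allI[OF Tset_finite])
  fix T
  show "AE w in stream_space (measure_pmf (task_pmf V d K)). (\<lambda>n. (\<Sum>i<n. real (fdeg d (R d T (w !! i)))) / real n) \<longlonglongrightarrow>
          measure_pmf.expectation (task_pmf V d K) (\<lambda>h. real (fdeg d (R d T h)))"
  proof (rule slln_pmf[where a = 0 and b = "real d + 1"])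
    fix h show "real (fdeg d (R d T h)) \<in> {0..real d + 1}"
      using fdeg_le_n[of d "R d T h"] by simp
  qed simp
qed

lemma main_det:
  fixes m d :: nat and \<psi> :: "(nat \<Rightarrow> real) \<Rightarrow> (nat \<Rightarrow> real)"
    and V :: "real set" and K :: "nat pmf"
  assumes "1 \<le> d" and "d \<le> m"
    and "\<psi> ` cube d \<subseteq> cube m" and "inj_on \<psi> (cube d)"
    and "finite V" and "{-1, 1} \<subseteq> V"
    and "\<forall>i\<in>{1..d}. 0 < pmf K i \<and> pmf K i < 1"
    and "(\<Sum>i=1..d. pmf K i) = 1"
    and elim0: "\<forall>T\<in>(\<lambda>\<Phi>. restrict (\<Phi> \<circ> \<psi>) (cube d)) ` admissible m d \<psi>.
        (\<lambda>n. (\<Sum>i<n. real (fdeg d (R d T (w !! i)))) / real n) \<longlonglongrightarrow>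
          measure_pmf.expectation (task_pmf V d K) (\<lambda>h. real (fdeg d (R d T h)))"
  shows "(\<forall>\<Phi>\<in>admissible m d \<psi>. convergent (objective m d \<psi> \<Phi> w)) \<and>
           (\<forall>\<Phi>s\<in>admissible m d \<psi>.
              (\<forall>\<Phi>\<in>admissible m d \<psi>. lim (objective m d \<psi> \<Phi>s w) \<le> lim (objective m d \<psi> \<Phi> w)) \<longrightarrow>
              (\<exists>\<pi> s. \<pi> permutes {..<d} \<and> (\<forall>j<d. s j \<in> {-1, 1::real}) \<and>
                 (\<forall>j<d. \<forall>z\<in>cube d. \<Phi>s (\<psi> z) j = s j * z (\<pi> j))))"
proof -
  note inj = assms(4)
  define P where "P = task_pmf V d K"
  define F where "F k = Fdk V d k" for k
  have V1: "1 \<in> V" using assms(6) by auto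
  have Ksup: "set_pmf K \<subseteq> {1..d}" using assms(8) by (rule Ksup_lemma)
  define Tset where "Tset = (\<lambda>\<Phi>. restrict (\<Phi> \<circ> \<psi>) (cube d)) ` admissible m d \<psi>"
  define gT where "gT T h = real (fdeg d (R d T h))" for T h
  define E where "E T = measure_pmf.expectation P (gT T)" for T
  have elim: "\<forall>T\<in>Tset. (\<lambda>n. (\<Sum>i<n. gT T (w !! i)) / real n) \<longlonglongrightarrow> E T"
    using elim0 unfolding Tset_def gT_def E_def P_def .
  have Eform: "E T = (\<Sum>k\<in>{1..d}. pmf K k * ((\<Sum>h\<in>F k. gT T h) / real (card (F k))))" for T
    unfolding E_def P_def F_def by (rule expect_task[OF assms(5) V1 Ksup])
  have cpos: "real (card (F k)) > 0" for k
    using Fdk_finite[OF assms(5)] Fdk_ne[OF V1] by (simp add: F_def card_gt_0_iff)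
    have limPhi: "objective m d \<psi> \<Phi> w \<longlonglongrightarrow> E (restrict (\<Phi> \<circ> \<psi>) (cube d))"
      if \<Phi>: "\<Phi> \<in> admissible m d \<psi>" for \<Phi>
    proof (rule obj_tendsto[OF \<Phi> inj])
      have "restrict (\<Phi> \<circ> \<psi>) (cube d) \<in> Tset" using \<Phi> by (simp add: Tset_def)
      then have "(\<lambda>n. (\<Sum>i<n. gT (restrict (\<Phi> \<circ> \<psi>) (cube d)) (w !! i)) / real n)
                   \<longlonglongrightarrow> E (restrict (\<Phi> \<circ> \<psi>) (cube d))"
        using elim by blast
      then show "(\<lambda>n. (\<Sum>i<n. real (fdeg d (R d (\<Phi> \<circ> \<psi>) (w !! i)))) / real n)
                   \<longlonglongrightarrow> E (restrict (\<Phi> \<circ> \<psi>) (cube d))"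
        by (simp only: gT_def R_restrict)
    qed
    have limeq: "lim (objective m d \<psi> \<Phi> w) = E (restrict (\<Phi> \<circ> \<psi>) (cube d))"
      if "\<Phi> \<in> admissible m d \<psi>" for \<Phi>
      using limPhi[OF that] by (rule limI)
    have conv: "\<forall>\<Phi>\<in>admissible m d \<psi>. convergent (objective m d \<psi> \<Phi> w)"
      using limPhi by (auto simp: convergent_def)
    have mini: "\<exists>\<pi> s. \<pi> permutes {..<d} \<and> (\<forall>j<d. s j \<in> {-1, 1::real}) \<and>
                 (\<forall>j<d. \<forall>z\<in>cube d. \<Phi>s (\<psi> z) j = s j * z (\<pi> j))"
      if \<Phi>s: "\<Phi>s \<in> admissible m d \<psi>"
        and min: "\<forall>\<Phi>\<in>admissible m d \<psi>. lim (objective m d \<psi> \<Phi>s w) \<le> lim (objective m d \<psi> \<Phi> w)"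
      for \<Phi>s
    proof -
      let ?Ts = "\<Phi>s \<circ> \<psi>"
      let ?T0 = "Phi0 d \<psi> \<circ> \<psi>"
      have Ts: "bij_betw ?Ts (cube d) (cube d)" using \<Phi>s by (simp add: admissible_def)
      have "E (restrict ?Ts (cube d)) \<le> E (restrict ?T0 (cube d))"
        using min Phi0(1)[OF inj, of m] limeq[OF \<Phi>s] limeq[OF Phi0(1)[OF inj, of m]] by auto
      define a where "a k = (\<Sum>h\<in>F k. real (fdeg d h))" for k
      define b where "b k = (\<Sum>h\<in>F k. real (fdeg d (R d ?Ts h)))" for k
      have Es: "E (restrict ?Ts (cube d)) = (\<Sum>k\<in>{1..d}. pmf K k * (b k / real (card (F k))))"
        unfolding Eform b_def gT_def R_restrict ..
      have inner: "(\<Sum>h\<in>F k. real (fdeg d (R d ?T0 h))) = (\<Sum>h\<in>F k. real (fdeg d h))" for k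
      proof (rule sum.cong[OF refl])
        fix h assume "h \<in> F k"
        then have "h \<in> Fd V d" by (simp add: F_def Fdk_def)
        then have "R d ?T0 h = h" by (intro R_id Phi0(2)[OF inj])
        then show "real (fdeg d (R d ?T0 h)) = real (fdeg d h)" by simp
      qed
      have E0: "E (restrict ?T0 (cube d)) = (\<Sum>k\<in>{1..d}. pmf K k * (a k / real (card (F k))))"
        unfolding Eform a_def gT_def R_restrict inner ..
      have ki: "(\<Sum>h\<in>F k. fdeg d h) \<le> (\<Sum>h\<in>F k. fdeg d (R d ?Ts h)) \<and>
         ((\<Sum>h\<in>F k. fdeg d (R d ?Ts h)) = (\<Sum>h\<in>F k. fdeg d h) \<longrightarrow> R d ?Ts ` F k = F k)" for k
        unfolding F_def by (rule key_ineq[OF Ts assms(5)])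
      have ab: "a k \<le> b k" for k
        using ki[of k] unfolding a_def b_def by (simp flip: of_nat_sum)
      define t where "t k = pmf K k * (b k / real (card (F k))) - pmf K k * (a k / real (card (F k)))" for k
      have tnn: "t k \<ge> 0" for k
        unfolding t_def using ab[of k] cpos[of k] pmf_nonneg[of K k]
        by (simp add: right_diff_distrib[symmetric] diff_divide_distrib[symmetric])
      have "(\<Sum>k\<in>{1..d}. t k) \<le> 0"
        using \<open>E _ \<le> E _\<close> unfolding Es E0 t_def by (simp add: sum_subtractf)
      then have "(\<Sum>k\<in>{1..d}. t k) = 0" using tnn by (meson sum_nonneg order_antisym)
      then have "t 1 = 0" using tnn assms(1) by (subst (asm) sum_nonneg_eq_0_iff) auto
      then have "pmf K 1 * ((b 1 - a 1) / real (card (F 1))) = 0"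
        by (simp add: t_def right_diff_distrib diff_divide_distrib)
      moreover have "pmf K 1 > 0" using assms(7) assms(1) by simp
      ultimately have "b 1 = a 1" using cpos[of 1] by auto
      then have "(\<Sum>h\<in>F 1. fdeg d (R d ?Ts h)) = (\<Sum>h\<in>F 1. fdeg d h)"
        unfolding a_def b_def by (simp flip: of_nat_sum)
      then have "R d ?Ts ` Fdk V d 1 = Fdk V d 1" using ki[of 1] by (simp add: F_def)
      from signed_perm[OF Ts assms(6) this]
      show ?thesis by simp
    qed
    show ?thesis using conv mini by blast
qed


theorem theorem4:
  fixes m d :: nat and \<psi> :: "(nat \<Rightarrow> real) \<Rightarrow> (nat \<Rightarrow> real)"
    and V :: "real set" and K :: "nat pmf"
  assumes "1 \<le> d" and "d \<le> m"
    and "\<psi> ` cube d \<subseteq> cube m" and "inj_on \<psi> (cube d)"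
    and "finite V" and "{-1, 1} \<subseteq> V"
    and "\<forall>i\<in>{1..d}. 0 < pmf K i \<and> pmf K i < 1"
    and "(\<Sum>i=1..d. pmf K i) = 1"
  shows "AE w in stream_space (measure_pmf (task_pmf V d K)).
           (\<forall>\<Phi>\<in>admissible m d \<psi>. convergent (objective m d \<psi> \<Phi> w)) \<and>
           (\<forall>\<Phi>s\<in>admissible m d \<psi>.
              (\<forall>\<Phi>\<in>admissible m d \<psi>. lim (objective m d \<psi> \<Phi>s w) \<le> lim (objective m d \<psi> \<Phi> w)) \<longrightarrow>
              (\<exists>\<pi> s. \<pi> permutes {..<d} \<and> (\<forall>j<d. s j \<in> {-1, 1::real}) \<and>
                 (\<forall>j<d. \<forall>z\<in>cube d. \<Phi>s (\<psi> z) j = s j * z (\<pi> j))))"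
  using main_AE[where V=V and d=d and K=K and \<psi>=\<psi> and m=m]
  by (rule eventually_mono) (rule main_det[OF assms])


end
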